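(* Let $\Psi=\begin{bmatrix}\Psi_{11}&\Psi_{12}\\ \Psi_{12}^\top&\Psi_{22}\end{bmatrix}$ be symmetric with $\Psi_{11}\in\mathbb{R}^{p\times p}$, $\Psi_{22}\in\mathbb{R}^{q\times q}$, and let $\mathcal{M}=\{Z\in\mathbb{R}^{p\times q}: \begin{bmatrix} I\\ Z^\top\end{bmatrix}^\top\Psi\begin{bmatrix} I\\ Z^\top\end{bmatrix}\ge0\}$. Define $\Psi|\Psi_{22}=\Psi_{11}-\Psi_{12}\Psi_{22}^{-1}\Psi_{12}^\top$ and $\Psi^\sharp=\begin{bmatrix}0&-I_q\\ I_p&0\end{bmatrix}\Psi^{-1}\begin{bmatrix}0&-I_p\\ I_q&0\end{bmatrix}$. Suppose $\Psi|\Psi_{22}>0$ and $\Psi_{22}<0$. Then $\mathcal{M}=\mathcal{M}_1=\mathcal{M}_2$, where \[ \mathcal{M}_1=\left\{Z: \begin{bmatrix} I\\ Z\end{bmatrix}^\top\Psi^\sharp\begin{bmatrix} I\\ Z\end{bmatrix}\ge0\right\},\qquad \mathcal{M}_2=\left\{Z: \begin{bmatrix} I\\ Z^\top\end{bmatrix}^\top\Psi\begin{bmatrix} I\\ Z^\top\end{bmatrix}=\mathcal{Q}\ \text{for some}\ \mathcal{Q}\ \text{with}\ 0\le\mathcal{Q}\le\Psi|\Psi_{22}\right\}. \] *)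

theory Defs
  imports "Jordan_Normal_Form.Matrix"
begin

text \<open>Inverse of a square matrix (the unique two-sided inverse; only meaningful when it exists).\<close>
definition mat_inv :: "real mat \<Rightarrow> real mat" where
  "mat_inv A = (THE B. B \<in> carrier_mat (dim_row A) (dim_row A) \<and> inverts_mat A B \<and> inverts_mat B A)"

definition psd :: "nat \<Rightarrow> real mat \<Rightarrow> bool" where
  "psd n A \<longleftrightarrow> A \<in> carrier_mat n n \<and> transpose_mat A = A \<and>
     (\<forall>v \<in> carrier_vec n. v \<bullet> (A *\<^sub>v v) \<ge> 0)"

definition pd :: "nat \<Rightarrow> real mat \<Rightarrow> bool" where
  "pd n A \<longleftrightarrow> A \<in> carrier_mat n n \<and> transpose_mat A = A \<and>
     (\<forall>v \<in> carrier_vec n. v \<noteq> 0\<^sub>v n \<longrightarrow> v \<bullet> (A *\<^sub>v v) > 0)"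

definition nd :: "nat \<Rightarrow> real mat \<Rightarrow> bool" where
  "nd n A \<longleftrightarrow> pd n (- A)"

definition loewner_le :: "nat \<Rightarrow> real mat \<Rightarrow> real mat \<Rightarrow> bool" where
  "loewner_le n A B \<longleftrightarrow> A \<in> carrier_mat n n \<and> B \<in> carrier_mat n n \<and> psd n (B - A)"

end

theory Submission
  imports Defs "Jordan_Normal_Form.Determinant"
begin

lemma mat_inv_eq:
  assumes A: "A \<in> carrier_mat n n" and B: "B \<in> carrier_mat n n"
    and AB: "A * B = 1\<^sub>m n" and BA: "B * A = 1\<^sub>m n"
  shows "mat_inv A = B"
  unfolding mat_inv_def
proof (rule the_equality)
  show "B \<in> carrier_mat (dim_row A) (dim_row A) \<and> inverts_mat A B \<and> inverts_mat B A"
    using A B AB BA by (auto simp: inverts_mat_def)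
next
  fix C assume "C \<in> carrier_mat (dim_row A) (dim_row A) \<and> inverts_mat A C \<and> inverts_mat C A"
  hence C: "C \<in> carrier_mat n n" and AC: "A * C = 1\<^sub>m n" and CA: "C * A = 1\<^sub>m n"
    using A by (auto simp: inverts_mat_def)
  have "C = C * (A * B)" using C AB by simp
  also have "\<dots> = (C * A) * B" using A B C by (simp add: assoc_mult_mat)
  also have "\<dots> = B" using CA B by simp
  finally show "C = B" .
qed

lemma mat_inv_inj:
  assumes A: "A \<in> carrier_mat n n"
    and inj: "\<And>v. v \<in> carrier_vec n \<Longrightarrow> A *\<^sub>v v = 0\<^sub>v n \<Longrightarrow> v = 0\<^sub>v n"
  shows "mat_inv A \<in> carrier_mat n n \<and> A * mat_inv A = 1\<^sub>m n \<and> mat_inv A * A = 1\<^sub>m n"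
proof -
  have "det A \<noteq> 0" using det_0_iff_vec_prod_zero[OF A] inj by auto
  from det_non_zero_imp_unit[OF A this, of undefined]
  obtain B where B: "B \<in> carrier_mat n n" "B * A = 1\<^sub>m n" "A * B = 1\<^sub>m n"
    unfolding Units_def ring_mat_def by auto
  have "mat_inv A = B" using mat_inv_eq[OF A B(1) B(3) B(2)] .
  thus ?thesis using B by auto
qed

lemma mat_inv_sym:
  assumes A: "A \<in> carrier_mat n n" and s: "transpose_mat A = A"
    and i: "mat_inv A \<in> carrier_mat n n \<and> A * mat_inv A = 1\<^sub>m n \<and> mat_inv A * A = 1\<^sub>m n"
  shows "transpose_mat (mat_inv A) = mat_inv A"
proof -
  let ?B = "mat_inv A"
  have 1: "transpose_mat ?B * A = 1\<^sub>m n"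
    using transpose_mult[of A n n ?B n, symmetric] A i s by auto
  have 2: "A * transpose_mat ?B = 1\<^sub>m n"
    using transpose_mult[of ?B n n A n, symmetric] A i s by auto
  have "mat_inv A = transpose_mat ?B" using mat_inv_eq[OF A _ 2 1] i by auto
  thus ?thesis by simp
qed

lemma tr_sc:
  fixes A :: "real mat"
  assumes A: "A \<in> carrier_mat m n" and x: "x \<in> carrier_vec n" and y: "y \<in> carrier_vec m"
  shows "(A *\<^sub>v x) \<bullet> y = x \<bullet> (transpose_mat A *\<^sub>v y)"
  using transpose_vec_mult_scalar[OF A x y] comm_scalar_prod[of "A *\<^sub>v x" m y]
    comm_scalar_prod[of x n "transpose_mat A *\<^sub>v y"] A x y by auto

lemma sym_sc:
  fixes A :: "real mat"
  assumes A: "A \<in> carrier_mat n n" and s: "transpose_mat A = A"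
    and x: "x \<in> carrier_vec n" and y: "y \<in> carrier_vec n"
  shows "(A *\<^sub>v x) \<bullet> y = x \<bullet> (A *\<^sub>v y)"
  using tr_sc[OF A x y] s by simp

lemma quad_tr:
  fixes B C :: "real mat"
  assumes B: "B \<in> carrier_mat m n" and C: "C \<in> carrier_mat m m" and v: "v \<in> carrier_vec n"
  shows "v \<bullet> ((transpose_mat B * C * B) *\<^sub>v v) = (B *\<^sub>v v) \<bullet> (C *\<^sub>v (B *\<^sub>v v))"
proof -
  have "(transpose_mat B * C * B) *\<^sub>v v = transpose_mat B *\<^sub>v (C *\<^sub>v (B *\<^sub>v v))"
  proof -
    have "(transpose_mat B * C * B) *\<^sub>v v = (transpose_mat B * C) *\<^sub>v (B *\<^sub>v v)"
      using B C v by (intro assoc_mult_mat_vec) auto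
    also have "\<dots> = transpose_mat B *\<^sub>v (C *\<^sub>v (B *\<^sub>v v))"
      using B C v by (intro assoc_mult_mat_vec) auto
    finally show ?thesis .
  qed
  thus ?thesis using tr_sc[OF B v, of "C *\<^sub>v (B *\<^sub>v v)"] B C v by auto
qed

lemma psd_tr:
  fixes B C :: "real mat"
  assumes B: "B \<in> carrier_mat m n" and C: "C \<in> carrier_mat m m" and s: "transpose_mat C = C"
  shows "psd n (transpose_mat B * C * B) \<longleftrightarrow>
     (\<forall>v \<in> carrier_vec n. (B *\<^sub>v v) \<bullet> (C *\<^sub>v (B *\<^sub>v v)) \<ge> 0)"
proof -
  have "transpose_mat (transpose_mat B * C * B) = transpose_mat B * C * B"
  proof -
    have "transpose_mat (transpose_mat B * C * B) = transpose_mat B * transpose_mat (transpose_mat B * C)"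
      using B C by (intro transpose_mult) auto
    also have "transpose_mat (transpose_mat B * C) = transpose_mat C * B"
      using B C transpose_mult[of "transpose_mat B" n m C m] by auto
    also have "transpose_mat B * (transpose_mat C * B) = transpose_mat B * C * B"
      using B C s by (simp add: assoc_mult_mat[of _ n m _ m _ n])
    finally show ?thesis .
  qed
  thus ?thesis using quad_tr[OF B C] B C unfolding psd_def by auto
qed


lemma key_ineq:
  fixes K Ki :: "real mat"
  assumes K: "K \<in> carrier_mat n n" and Ks: "transpose_mat K = K"
    and Kp: "\<And>x. x \<in> carrier_vec n \<Longrightarrow> x \<bullet> (K *\<^sub>v x) \<ge> 0"
    and Ki: "Ki \<in> carrier_mat n n" and KKi: "K * Ki = 1\<^sub>m n"
    and b: "b \<in> carrier_vec n" and u: "u \<in> carrier_vec n"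
  shows "2 * (b \<bullet> u) \<le> b \<bullet> (Ki *\<^sub>v b) + u \<bullet> (K *\<^sub>v u)"
proof -
  define x where "x = Ki *\<^sub>v b - u"
  have x: "x \<in> carrier_vec n" using Ki b u by (simp add: x_def)
  have kib: "Ki *\<^sub>v b \<in> carrier_vec n" using Ki b by simp
  have KK: "K *\<^sub>v (Ki *\<^sub>v b) = b"
    using assoc_mult_mat_vec[OF K Ki b, symmetric] KKi b by simp
  have Kx: "K *\<^sub>v x = b - K *\<^sub>v u"
    unfolding x_def using mult_minus_distrib_mat_vec[OF K kib u] KK by simp
  have "x \<bullet> (K *\<^sub>v x) = (Ki *\<^sub>v b) \<bullet> b - (Ki *\<^sub>v b) \<bullet> (K *\<^sub>v u) - (u \<bullet> b - u \<bullet> (K *\<^sub>v u))"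
    unfolding Kx unfolding x_def
    using K b u kib by (simp add: minus_scalar_prod_distrib[of _ n] scalar_prod_minus_distrib[of _ n])
  also have "(Ki *\<^sub>v b) \<bullet> (K *\<^sub>v u) = b \<bullet> u"
    using sym_sc[OF K Ks kib u] KK by simp
  also have "(Ki *\<^sub>v b) \<bullet> b = b \<bullet> (Ki *\<^sub>v b)" using comm_scalar_prod[OF kib b] .
  also have "u \<bullet> b = b \<bullet> u" using comm_scalar_prod[OF u b] .
  finally show ?thesis using Kp[OF x] by linarith
qed

lemma equiv_core:
  fixes S Si N Ni W :: "real mat"
  assumes S: "S \<in> carrier_mat p p" and Ss: "transpose_mat S = S"
    and Sp: "\<And>x. x \<in> carrier_vec p \<Longrightarrow> x \<bullet> (S *\<^sub>v x) \<ge> 0"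
    and Si: "Si \<in> carrier_mat p p" and SSi: "S * Si = 1\<^sub>m p"
    and N: "N \<in> carrier_mat q q" and Ns: "transpose_mat N = N"
    and Np: "\<And>x. x \<in> carrier_vec q \<Longrightarrow> x \<bullet> (N *\<^sub>v x) \<ge> 0"
    and Ni: "Ni \<in> carrier_mat q q" and NNi: "N * Ni = 1\<^sub>m q" and NiN: "Ni * N = 1\<^sub>m q"
    and W: "W \<in> carrier_mat p q"
  shows "(\<forall>u \<in> carrier_vec p. (transpose_mat W *\<^sub>v u) \<bullet> (N *\<^sub>v (transpose_mat W *\<^sub>v u)) \<le> u \<bullet> (S *\<^sub>v u))
     \<longleftrightarrow> (\<forall>v \<in> carrier_vec q. (W *\<^sub>v v) \<bullet> (Si *\<^sub>v (W *\<^sub>v v)) \<le> v \<bullet> (Ni *\<^sub>v v))"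
proof
  assume H: "\<forall>u \<in> carrier_vec p. (transpose_mat W *\<^sub>v u) \<bullet> (N *\<^sub>v (transpose_mat W *\<^sub>v u)) \<le> u \<bullet> (S *\<^sub>v u)"
  show "\<forall>v \<in> carrier_vec q. (W *\<^sub>v v) \<bullet> (Si *\<^sub>v (W *\<^sub>v v)) \<le> v \<bullet> (Ni *\<^sub>v v)"
  proof
    fix v :: "real vec" assume v: "v \<in> carrier_vec q"
    define b where "b = W *\<^sub>v v"
    define u where "u = Si *\<^sub>v b"
    define a where "a = transpose_mat W *\<^sub>v u"
    have b: "b \<in> carrier_vec p" using W v b_def by simp
    have u: "u \<in> carrier_vec p" using Si b u_def by simp
    have a: "a \<in> carrier_vec q" using W u a_def by simp
    have va: "v \<bullet> a = b \<bullet> u" using tr_sc[OF W v u] unfolding a_def b_def by simp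
    have SSib: "S *\<^sub>v u = b"
      using assoc_mult_mat_vec[OF S Si b, symmetric] SSi b unfolding u_def by simp
    have "a \<bullet> (N *\<^sub>v a) \<le> u \<bullet> (S *\<^sub>v u)" using H u unfolding a_def by auto
    also have "\<dots> = b \<bullet> u" using SSib comm_scalar_prod[OF u b] by simp
    finally have 1: "a \<bullet> (N *\<^sub>v a) \<le> b \<bullet> u" .
    have 2: "2 * (v \<bullet> a) \<le> v \<bullet> (Ni *\<^sub>v v) + a \<bullet> (N *\<^sub>v a)"
      by (rule key_ineq[OF N Ns Np Ni NNi v a])
    show "(W *\<^sub>v v) \<bullet> (Si *\<^sub>v (W *\<^sub>v v)) \<le> v \<bullet> (Ni *\<^sub>v v)"
      using 1 2 va unfolding b_def[symmetric] u_def[symmetric] by linarith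
  qed
next
  assume H: "\<forall>v \<in> carrier_vec q. (W *\<^sub>v v) \<bullet> (Si *\<^sub>v (W *\<^sub>v v)) \<le> v \<bullet> (Ni *\<^sub>v v)"
  show "\<forall>u \<in> carrier_vec p. (transpose_mat W *\<^sub>v u) \<bullet> (N *\<^sub>v (transpose_mat W *\<^sub>v u)) \<le> u \<bullet> (S *\<^sub>v u)"
  proof
    fix u :: "real vec" assume u: "u \<in> carrier_vec p"
    define a where "a = transpose_mat W *\<^sub>v u"
    define v where "v = N *\<^sub>v a"
    have a: "a \<in> carrier_vec q" using W u a_def by simp
    have v: "v \<in> carrier_vec q" using N a v_def by simp
    have Wv: "W *\<^sub>v v \<in> carrier_vec p" using W v by simp
    have d: "(W *\<^sub>v v) \<bullet> u = a \<bullet> (N *\<^sub>v a)"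
      using tr_sc[OF W v u] comm_scalar_prod[OF v a] unfolding a_def[symmetric] v_def by simp
    have NiNa: "Ni *\<^sub>v v = a"
      using assoc_mult_mat_vec[OF Ni N a, symmetric] NiN a unfolding v_def by simp
    have "(W *\<^sub>v v) \<bullet> (Si *\<^sub>v (W *\<^sub>v v)) \<le> v \<bullet> (Ni *\<^sub>v v)" using H v by auto
    also have "\<dots> = a \<bullet> (N *\<^sub>v a)" using NiNa comm_scalar_prod[OF v a] v_def by simp
    finally have 1: "(W *\<^sub>v v) \<bullet> (Si *\<^sub>v (W *\<^sub>v v)) \<le> a \<bullet> (N *\<^sub>v a)" .
    have 2: "2 * ((W *\<^sub>v v) \<bullet> u) \<le> (W *\<^sub>v v) \<bullet> (Si *\<^sub>v (W *\<^sub>v v)) + u \<bullet> (S *\<^sub>v u)"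
      by (rule key_ineq[OF S Ss Sp Si SSi Wv u])
    show "(transpose_mat W *\<^sub>v u) \<bullet> (N *\<^sub>v (transpose_mat W *\<^sub>v u)) \<le> u \<bullet> (S *\<^sub>v u)"
      using 1 2 d unfolding a_def[symmetric] by linarith
  qed
qed


context
  fixes p q :: nat and P11 P12 P22 Ai :: "real mat"
  assumes P11: "P11 \<in> carrier_mat p p" and P12: "P12 \<in> carrier_mat p q"
    and P22: "P22 \<in> carrier_mat q q"
    and P11s: "transpose_mat P11 = P11" and P22s: "transpose_mat P22 = P22"
    and Ai: "Ai \<in> carrier_mat q q" and PAi: "P22 * Ai = 1\<^sub>m q" and AiP: "Ai * P22 = 1\<^sub>m q"
    and Ais: "transpose_mat Ai = Ai"
begin

lemma Sv:
  assumes y: "y \<in> carrier_vec p"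
  shows "(P11 - P12 * Ai * transpose_mat P12) *\<^sub>v y = P11 *\<^sub>v y - P12 *\<^sub>v (Ai *\<^sub>v (transpose_mat P12 *\<^sub>v y))"
proof -
  have c: "P12 * Ai * transpose_mat P12 \<in> carrier_mat p p" using P12 Ai by simp
  have "(P12 * Ai * transpose_mat P12) *\<^sub>v y = (P12 * Ai) *\<^sub>v (transpose_mat P12 *\<^sub>v y)"
    using P12 Ai y by (intro assoc_mult_mat_vec) auto
  also have "\<dots> = P12 *\<^sub>v (Ai *\<^sub>v (transpose_mat P12 *\<^sub>v y))"
    using P12 Ai y by (intro assoc_mult_mat_vec) auto
  finally show ?thesis using minus_mult_distrib_mat_vec[OF P11 c y] by simp
qed

lemma Psi_v:
  assumes y1: "y1 \<in> carrier_vec p" and y2: "y2 \<in> carrier_vec q"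
  shows "four_block_mat P11 P12 (transpose_mat P12) P22 *\<^sub>v (y1 @\<^sub>v y2)
     = (P11 *\<^sub>v y1 + P12 *\<^sub>v y2) @\<^sub>v (transpose_mat P12 *\<^sub>v y1 + P22 *\<^sub>v y2)"
  using four_block_mat_mult_vec[OF P11 P12 _ P22 y1 y2] P12 by simp

lemma solve:
  assumes y1: "y1 \<in> carrier_vec p" and y2: "y2 \<in> carrier_vec q"
    and a: "a \<in> carrier_vec p" and b: "b \<in> carrier_vec q"
    and eq: "four_block_mat P11 P12 (transpose_mat P12) P22 *\<^sub>v (y1 @\<^sub>v y2) = a @\<^sub>v b"
  shows "(P11 - P12 * Ai * transpose_mat P12) *\<^sub>v y1 = a - P12 *\<^sub>v (Ai *\<^sub>v b)"
    and "y2 + Ai *\<^sub>v (transpose_mat P12 *\<^sub>v y1) = Ai *\<^sub>v b"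
proof -
  have e: "P11 *\<^sub>v y1 + P12 *\<^sub>v y2 = a" "transpose_mat P12 *\<^sub>v y1 + P22 *\<^sub>v y2 = b"
    using eq Psi_v[OF y1 y2] append_vec_eq[of "P11 *\<^sub>v y1 + P12 *\<^sub>v y2" p a] P11 P12 y1 y2 a
    by auto
  define c where "c = Ai *\<^sub>v (transpose_mat P12 *\<^sub>v y1)"
  have c: "c \<in> carrier_vec q" using Ai P12 y1 c_def by simp
  have t: "transpose_mat P12 *\<^sub>v y1 \<in> carrier_vec q" using P12 y1 by simp
  have "Ai *\<^sub>v b = c + Ai *\<^sub>v (P22 *\<^sub>v y2)"
    unfolding e(2)[symmetric] c_def using mult_add_distrib_mat_vec[OF Ai t] P22 y2 by simp
  also have "Ai *\<^sub>v (P22 *\<^sub>v y2) = y2"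
    using assoc_mult_mat_vec[OF Ai P22 y2, symmetric] AiP y2 by simp
  finally have 2: "Ai *\<^sub>v b = c + y2" .
  thus "y2 + Ai *\<^sub>v (transpose_mat P12 *\<^sub>v y1) = Ai *\<^sub>v b"
    unfolding c_def[symmetric] using c y2 by (simp add: comm_add_vec)
  have P12y2: "P12 *\<^sub>v (Ai *\<^sub>v b) = P12 *\<^sub>v c + P12 *\<^sub>v y2"
    unfolding 2 using mult_add_distrib_mat_vec[OF P12 c y2] .
  show "(P11 - P12 * Ai * transpose_mat P12) *\<^sub>v y1 = a - P12 *\<^sub>v (Ai *\<^sub>v b)"
    unfolding Sv[OF y1] c_def[symmetric]
  proof (rule eq_vecI)
    fix i assume "i < dim_vec (a - P12 *\<^sub>v (Ai *\<^sub>v b))"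
    hence i: "i < p" using a P12 by simp
    have "(P12 *\<^sub>v (Ai *\<^sub>v b)) $ i = (P12 *\<^sub>v c) $ i + (P12 *\<^sub>v y2) $ i"
      using P12y2 i P12 by (metis carrier_matD(1) dim_mult_mat_vec index_add_vec(1))
    moreover have "(P11 *\<^sub>v y1) $ i + (P12 *\<^sub>v y2) $ i = a $ i"
      using arg_cong[OF e(1), of "\<lambda>v. v $ i"] i P12 by simp
    ultimately show "(P11 *\<^sub>v y1 - P12 *\<^sub>v c) $ i = (a - P12 *\<^sub>v (Ai *\<^sub>v b)) $ i"
      using i P11 P12 a by simp
  qed (insert P11 a, auto)
qed

lemma phi:
  assumes y1: "y1 \<in> carrier_vec p" and y2: "y2 \<in> carrier_vec q"
  shows "(y1 @\<^sub>v y2) \<bullet> (four_block_mat P11 P12 (transpose_mat P12) P22 *\<^sub>v (y1 @\<^sub>v y2))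
    = y1 \<bullet> ((P11 - P12 * Ai * transpose_mat P12) *\<^sub>v y1)
      + (y2 + Ai *\<^sub>v (transpose_mat P12 *\<^sub>v y1)) \<bullet> (P22 *\<^sub>v (y2 + Ai *\<^sub>v (transpose_mat P12 *\<^sub>v y1)))"
proof -
  define c where "c = Ai *\<^sub>v (transpose_mat P12 *\<^sub>v y1)"
  have c: "c \<in> carrier_vec q" using Ai P12 y1 c_def by simp
  have t: "transpose_mat P12 *\<^sub>v y1 \<in> carrier_vec q" using P12 y1 by simp
  have Pc: "P22 *\<^sub>v c = transpose_mat P12 *\<^sub>v y1"
    unfolding c_def using assoc_mult_mat_vec[OF P22 Ai t, symmetric] PAi t by simp
  have a1: "P11 *\<^sub>v y1 \<in> carrier_vec p" "P12 *\<^sub>v y2 \<in> carrier_vec p" "P12 *\<^sub>v c \<in> carrier_vec p"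
    "P22 *\<^sub>v y2 \<in> carrier_vec q" "P22 *\<^sub>v c \<in> carrier_vec q"
    using P11 P12 P22 y1 y2 c by auto
  have L: "(y1 @\<^sub>v y2) \<bullet> (four_block_mat P11 P12 (transpose_mat P12) P22 *\<^sub>v (y1 @\<^sub>v y2))
     = y1 \<bullet> (P11 *\<^sub>v y1) + y1 \<bullet> (P12 *\<^sub>v y2) + (y2 \<bullet> (transpose_mat P12 *\<^sub>v y1) + y2 \<bullet> (P22 *\<^sub>v y2))"
    unfolding Psi_v[OF y1 y2]
    using scalar_prod_append[OF y1 y2, of "P11 *\<^sub>v y1 + P12 *\<^sub>v y2" "transpose_mat P12 *\<^sub>v y1 + P22 *\<^sub>v y2"]
      a1 t y1 y2 by (simp add: scalar_prod_add_distrib[of _ p] scalar_prod_add_distrib[of _ q])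
  have R1: "y1 \<bullet> ((P11 - P12 * Ai * transpose_mat P12) *\<^sub>v y1) = y1 \<bullet> (P11 *\<^sub>v y1) - y1 \<bullet> (P12 *\<^sub>v c)"
    unfolding Sv[OF y1] c_def[symmetric] using a1 y1 by (simp add: scalar_prod_minus_distrib[of _ p])
  have R2: "(y2 + c) \<bullet> (P22 *\<^sub>v (y2 + c)) = y2 \<bullet> (P22 *\<^sub>v y2) + y2 \<bullet> (P22 *\<^sub>v c) + (c \<bullet> (P22 *\<^sub>v y2) + c \<bullet> (P22 *\<^sub>v c))"
    using mult_add_distrib_mat_vec[OF P22 y2 c] a1 y2 c
    by (simp add: add_scalar_prod_distrib[of _ q] scalar_prod_add_distrib[of _ q])
  have e1: "c \<bullet> (P22 *\<^sub>v y2) = y1 \<bullet> (P12 *\<^sub>v y2)"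
    using sym_sc[OF P22 P22s c y2, symmetric] Pc tr_sc[OF P12 y2 y1] comm_scalar_prod[OF a1(2) y1]
      comm_scalar_prod[OF t y2] by simp
  have e2: "c \<bullet> (P22 *\<^sub>v c) = y1 \<bullet> (P12 *\<^sub>v c)"
    using Pc tr_sc[OF P12 c y1] comm_scalar_prod[OF a1(3) y1] comm_scalar_prod[OF t c] by simp
  have e3: "y2 \<bullet> (P22 *\<^sub>v c) = y2 \<bullet> (transpose_mat P12 *\<^sub>v y1)" using Pc by simp
  show ?thesis unfolding c_def[symmetric] L R1 R2 e1 e2 e3 by simp
qed

end


lemma sym_tr:
  fixes B C :: "real mat"
  assumes B: "B \<in> carrier_mat m n" and C: "C \<in> carrier_mat m m" and s: "transpose_mat C = C"
  shows "transpose_mat (transpose_mat B * C * B) = transpose_mat B * C * B"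
  using psd_tr[OF B C s] unfolding psd_def
proof -
  have "transpose_mat (transpose_mat B * C * B) = transpose_mat B * transpose_mat (transpose_mat B * C)"
    using B C by (intro transpose_mult) auto
  also have "transpose_mat (transpose_mat B * C) = transpose_mat C * B"
    using B C transpose_mult[of "transpose_mat B" n m C m] by auto
  also have "transpose_mat B * (transpose_mat C * B) = transpose_mat B * C * B"
    using B C s by (simp add: assoc_mult_mat[of _ n m _ m _ n])
  finally show ?thesis .
qed

context
  fixes p q :: nat and P11 P12 P22 Ai S Z :: "real mat"
  assumes P11: "P11 \<in> carrier_mat p p" and P12: "P12 \<in> carrier_mat p q"
    and P22: "P22 \<in> carrier_mat q q"
    and P11s: "transpose_mat P11 = P11" and P22s: "transpose_mat P22 = P22"
    and Ai: "Ai \<in> carrier_mat q q" and PAi: "P22 * Ai = 1\<^sub>m q" and AiP: "Ai * P22 = 1\<^sub>m q"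
    and Ais: "transpose_mat Ai = Ai"
    and S_def: "S = P11 - P12 * Ai * transpose_mat P12"
    and Ss: "transpose_mat S = S"
    and Nneg: "\<And>x. x \<in> carrier_vec q \<Longrightarrow> x \<bullet> (P22 *\<^sub>v x) \<le> 0"
    and Z: "Z \<in> carrier_mat p q"
begin

lemma S: "S \<in> carrier_mat p p" unfolding S_def using P12 Ai by (intro minus_carrier_mat) auto

lemma Psi: "four_block_mat P11 P12 (transpose_mat P12) P22 \<in> carrier_mat (p+q) (p+q)"
  using P11 P12 P22 by simp

lemma Psis: "transpose_mat (four_block_mat P11 P12 (transpose_mat P12) P22) = four_block_mat P11 P12 (transpose_mat P12) P22"
  using transpose_four_block_mat[OF P11 P12 _ P22] P12 P11s P22s by simp

lemma WTc: "transpose_mat (Z + P12 * Ai) \<in> carrier_mat q p"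
  using Z P12 Ai by (simp add: add_carrier_mat[of "P12 * Ai" p q])

lemma T: "(1\<^sub>m p @\<^sub>r transpose_mat Z) \<in> carrier_mat (p+q) p" using Z by auto

lemma Wt:
  assumes u: "u \<in> carrier_vec p"
  shows "transpose_mat (Z + P12 * Ai) *\<^sub>v u = transpose_mat Z *\<^sub>v u + Ai *\<^sub>v (transpose_mat P12 *\<^sub>v u)"
proof -
  have "transpose_mat (Z + P12 * Ai) = transpose_mat Z + Ai * transpose_mat P12"
    using transpose_add[of Z p q "P12 * Ai"] transpose_mult[OF P12 Ai] Ais Z P12 Ai by simp
  moreover have "(Ai * transpose_mat P12) *\<^sub>v u = Ai *\<^sub>v (transpose_mat P12 *\<^sub>v u)"
    using Ai P12 u by (intro assoc_mult_mat_vec) auto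
  ultimately show ?thesis using add_mult_distrib_mat_vec[of "transpose_mat Z" q p "Ai * transpose_mat P12" u] Z Ai P12 u
    by simp
qed

lemma Fquad:
  assumes u: "u \<in> carrier_vec p"
  shows "u \<bullet> ((transpose_mat (1\<^sub>m p @\<^sub>r transpose_mat Z) * four_block_mat P11 P12 (transpose_mat P12) P22
            * (1\<^sub>m p @\<^sub>r transpose_mat Z)) *\<^sub>v u)
     = u \<bullet> (S *\<^sub>v u) + (transpose_mat (Z + P12 * Ai) *\<^sub>v u) \<bullet> (P22 *\<^sub>v (transpose_mat (Z + P12 * Ai) *\<^sub>v u))"
proof -
  have Tu: "(1\<^sub>m p @\<^sub>r transpose_mat Z) *\<^sub>v u = u @\<^sub>v (transpose_mat Z *\<^sub>v u)"
    using mat_mult_append[of "1\<^sub>m p" p p "transpose_mat Z" q u] Z u by simp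
  have Zu: "transpose_mat Z *\<^sub>v u \<in> carrier_vec q" using Z u by simp
  show ?thesis
    unfolding quad_tr[OF T Psi u] Tu Wt[OF u] S_def
    using phi[OF P11 P12 P22 P11s P22s Ai PAi AiP Ais u Zu] .
qed

lemma charM:
  "psd p (transpose_mat (1\<^sub>m p @\<^sub>r transpose_mat Z) * four_block_mat P11 P12 (transpose_mat P12) P22
            * (1\<^sub>m p @\<^sub>r transpose_mat Z))
   \<longleftrightarrow> (\<forall>u \<in> carrier_vec p. (transpose_mat (Z + P12 * Ai) *\<^sub>v u) \<bullet> ((- P22) *\<^sub>v (transpose_mat (Z + P12 * Ai) *\<^sub>v u)) \<le> u \<bullet> (S *\<^sub>v u))"
proof -
  have W: "transpose_mat (Z + P12 * Ai) \<in> carrier_mat q p" using Z P12 Ai by simp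
  have "psd p (transpose_mat (1\<^sub>m p @\<^sub>r transpose_mat Z) * four_block_mat P11 P12 (transpose_mat P12) P22
            * (1\<^sub>m p @\<^sub>r transpose_mat Z)) \<longleftrightarrow>
     (\<forall>u \<in> carrier_vec p. u \<bullet> ((transpose_mat (1\<^sub>m p @\<^sub>r transpose_mat Z) * four_block_mat P11 P12 (transpose_mat P12) P22
            * (1\<^sub>m p @\<^sub>r transpose_mat Z)) *\<^sub>v u) \<ge> 0)"
    unfolding psd_tr[OF T Psi Psis] using quad_tr[OF T Psi] by auto
  also have "\<dots> \<longleftrightarrow> (\<forall>u \<in> carrier_vec p. (transpose_mat (Z + P12 * Ai) *\<^sub>v u) \<bullet> ((- P22) *\<^sub>v (transpose_mat (Z + P12 * Ai) *\<^sub>v u)) \<le> u \<bullet> (S *\<^sub>v u))"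
  proof (intro ball_cong refl)
    fix u :: "real vec" assume u: "u \<in> carrier_vec p"
    have wc: "transpose_mat (Z + P12 * Ai) *\<^sub>v u \<in> carrier_vec q" using mult_mat_vec_carrier[OF WTc u] .
    show "(0 \<le> u \<bullet> ((transpose_mat (1\<^sub>m p @\<^sub>r transpose_mat Z) * four_block_mat P11 P12 (transpose_mat P12) P22
            * (1\<^sub>m p @\<^sub>r transpose_mat Z)) *\<^sub>v u)) \<longleftrightarrow> (transpose_mat (Z + P12 * Ai) *\<^sub>v u) \<bullet> ((- P22) *\<^sub>v (transpose_mat (Z + P12 * Ai) *\<^sub>v u)) \<le> u \<bullet> (S *\<^sub>v u)"
    proof -
      let ?w = "transpose_mat (Z + P12 * Ai) *\<^sub>v u"
      have d: "dim_vec ?w = dim_col P22" "dim_vec ?w = dim_vec (P22 *\<^sub>v ?w)" using wc P22 Ai by auto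
      have "?w \<bullet> ((- P22) *\<^sub>v ?w) = - (?w \<bullet> (P22 *\<^sub>v ?w))"
        using uminus_mult_mat_vec[OF d(1)] scalar_prod_uminus_right[OF d(2)] by simp
      thus ?thesis unfolding Fquad[OF u] by linarith
    qed
  qed
  finally show ?thesis .
qed

lemma charM2:
  "psd p (transpose_mat (1\<^sub>m p @\<^sub>r transpose_mat Z) * four_block_mat P11 P12 (transpose_mat P12) P22
            * (1\<^sub>m p @\<^sub>r transpose_mat Z))
   \<Longrightarrow> loewner_le p (transpose_mat (1\<^sub>m p @\<^sub>r transpose_mat Z) * four_block_mat P11 P12 (transpose_mat P12) P22
            * (1\<^sub>m p @\<^sub>r transpose_mat Z)) S"
proof -
  let ?F = "transpose_mat (1\<^sub>m p @\<^sub>r transpose_mat Z) * four_block_mat P11 P12 (transpose_mat P12) P22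
            * (1\<^sub>m p @\<^sub>r transpose_mat Z)"
  have F: "?F \<in> carrier_mat p p" using T Psi by auto
  have Fs: "transpose_mat ?F = ?F" by (rule sym_tr[OF T Psi Psis])
  have "psd p (S - ?F)" unfolding psd_def
  proof (intro conjI ballI)
    show "S - ?F \<in> carrier_mat p p" using F by (rule minus_carrier_mat)
    show "transpose_mat (S - ?F) = S - ?F" using transpose_minus[OF S F] Ss Fs by simp
    fix u :: "real vec" assume u: "u \<in> carrier_vec p"
    have wc: "transpose_mat (Z + P12 * Ai) *\<^sub>v u \<in> carrier_vec q" using mult_mat_vec_carrier[OF WTc u] .
    have "u \<bullet> ((S - ?F) *\<^sub>v u) = u \<bullet> (S *\<^sub>v u) - u \<bullet> (?F *\<^sub>v u)"
      using minus_mult_distrib_mat_vec[OF S F u] S F u by (simp add: scalar_prod_minus_distrib[of _ p])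
    also have "\<dots> = - ((transpose_mat (Z + P12 * Ai) *\<^sub>v u) \<bullet> (P22 *\<^sub>v (transpose_mat (Z + P12 * Ai) *\<^sub>v u)))"
      unfolding Fquad[OF u] by simp
    also have "\<dots> \<ge> 0" using Nneg[OF wc] by simp
    finally show "0 \<le> u \<bullet> ((S - ?F) *\<^sub>v u)" .
  qed
  thus ?thesis unfolding loewner_le_def using S F by simp
qed

end


lemma neg_quad:
  fixes A :: "real mat"
  assumes A: "A \<in> carrier_mat n n" and w: "w \<in> carrier_vec n"
  shows "w \<bullet> ((- A) *\<^sub>v w) = - (w \<bullet> (A *\<^sub>v w))"
proof -
  have d: "dim_vec w = dim_col A" "dim_vec w = dim_vec (A *\<^sub>v w)" using A w by auto
  show ?thesis using uminus_mult_mat_vec[OF d(1)] scalar_prod_uminus_right[OF d(2)] by simp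
qed

context
  fixes p q :: nat and P11 P12 P22 Ai S Z Si X :: "real mat"
  assumes P11: "P11 \<in> carrier_mat p p" and P12: "P12 \<in> carrier_mat p q"
    and P22: "P22 \<in> carrier_mat q q"
    and P11s: "transpose_mat P11 = P11" and P22s: "transpose_mat P22 = P22"
    and Ai: "Ai \<in> carrier_mat q q" and PAi: "P22 * Ai = 1\<^sub>m q" and AiP: "Ai * P22 = 1\<^sub>m q"
    and Ais: "transpose_mat Ai = Ai"
    and S_def: "S = P11 - P12 * Ai * transpose_mat P12"
    and Z: "Z \<in> carrier_mat p q"
    and Si: "Si \<in> carrier_mat p p" and SiS: "Si * S = 1\<^sub>m p"
    and X: "X \<in> carrier_mat (p+q) (p+q)" and PX: "four_block_mat P11 P12 (transpose_mat P12) P22 * X = 1\<^sub>m (p+q)"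
    and Xs: "transpose_mat X = X"
begin

lemma core:
  assumes v: "v \<in> carrier_vec q"
  shows "((- (Z *\<^sub>v v)) @\<^sub>v v) \<bullet> (X *\<^sub>v ((- (Z *\<^sub>v v)) @\<^sub>v v))
    = ((Z + P12 * Ai) *\<^sub>v v) \<bullet> (Si *\<^sub>v ((Z + P12 * Ai) *\<^sub>v v)) + v \<bullet> (Ai *\<^sub>v v)"
proof -
  let ?Psi = "four_block_mat P11 P12 (transpose_mat P12) P22"
  have Psi: "?Psi \<in> carrier_mat (p+q) (p+q)" using P11 P12 P22 by simp
  define r where "r = (- (Z *\<^sub>v v)) @\<^sub>v v"
  have zv: "- (Z *\<^sub>v v) \<in> carrier_vec p" using Z v by simp
  have r: "r \<in> carrier_vec (p+q)" using zv v r_def by simp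
  define y where "y = X *\<^sub>v r"
  have y: "y \<in> carrier_vec (p+q)" using X r y_def by simp
  define y1 where "y1 = vec_first y p"
  define y2 where "y2 = vec_last y q"
  have y1: "y1 \<in> carrier_vec p" and y2: "y2 \<in> carrier_vec q" unfolding y1_def y2_def by auto
  have yy: "y = y1 @\<^sub>v y2" unfolding y1_def y2_def using y by simp
  have Py: "?Psi *\<^sub>v y = r"
    unfolding y_def using assoc_mult_mat_vec[OF Psi X r, symmetric] PX r by simp
  have "r \<bullet> (X *\<^sub>v r) = y \<bullet> (?Psi *\<^sub>v y)"
  proof -
    have "r \<bullet> (X *\<^sub>v r) = r \<bullet> y" unfolding y_def ..
    also have "\<dots> = (?Psi *\<^sub>v y) \<bullet> y" using Py by simp
    also have "\<dots> = y \<bullet> (?Psi *\<^sub>v y)" using comm_scalar_prod[of "?Psi *\<^sub>v y" "p+q" y] Psi y by simp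
    finally show ?thesis .
  qed
  also have "\<dots> = y1 \<bullet> (S *\<^sub>v y1) + (y2 + Ai *\<^sub>v (transpose_mat P12 *\<^sub>v y1)) \<bullet> (P22 *\<^sub>v (y2 + Ai *\<^sub>v (transpose_mat P12 *\<^sub>v y1)))"
    unfolding yy S_def by (rule phi[OF P11 P12 P22 P11s P22s Ai PAi AiP Ais y1 y2])
  finally have 1: "r \<bullet> (X *\<^sub>v r) = y1 \<bullet> (S *\<^sub>v y1) + (y2 + Ai *\<^sub>v (transpose_mat P12 *\<^sub>v y1)) \<bullet> (P22 *\<^sub>v (y2 + Ai *\<^sub>v (transpose_mat P12 *\<^sub>v y1)))" .
  have eq: "?Psi *\<^sub>v (y1 @\<^sub>v y2) = (- (Z *\<^sub>v v)) @\<^sub>v v" using Py yy r_def by simp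
  note sol = solve[OF P11 P12 P22 P11s P22s Ai PAi AiP Ais y1 y2 zv v eq]
  define b where "b = (Z + P12 * Ai) *\<^sub>v v"
  have Wc: "Z + P12 * Ai \<in> carrier_mat p q" using P12 Ai by (intro add_carrier_mat) auto
  have b: "b \<in> carrier_vec p" unfolding b_def using mult_mat_vec_carrier[OF Wc v] .
  have aiv: "Ai *\<^sub>v v \<in> carrier_vec q" using Ai v by simp
  have bexp: "b = Z *\<^sub>v v + P12 *\<^sub>v (Ai *\<^sub>v v)"
    unfolding b_def using add_mult_distrib_mat_vec[of Z p q "P12 * Ai" v] assoc_mult_mat_vec[OF P12 Ai v] Z P12 Ai v
    by simp
  have Sy1: "S *\<^sub>v y1 = - b"
    unfolding S_def sol(1) bexp by (rule eq_vecI, insert Z P12 Ai v, auto)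
  have y1e: "y1 = - (Si *\<^sub>v b)"
  proof -
    have S: "S \<in> carrier_mat p p" unfolding S_def using P12 Ai by (intro minus_carrier_mat) auto
    have "y1 = Si *\<^sub>v (S *\<^sub>v y1)" using assoc_mult_mat_vec[OF Si S y1, symmetric] SiS y1 by simp
    also have "\<dots> = - (Si *\<^sub>v b)" unfolding Sy1 by (rule eq_vecI, insert Si b, auto)
    finally show ?thesis .
  qed
  have t1: "y1 \<bullet> (S *\<^sub>v y1) = b \<bullet> (Si *\<^sub>v b)"
  proof -
    have "y1 \<bullet> (S *\<^sub>v y1) = (- (Si *\<^sub>v b)) \<bullet> (- b)" using Sy1 y1e by simp
    also have "\<dots> = (Si *\<^sub>v b) \<bullet> b" using Si b by simp
    finally show ?thesis using Si b comm_scalar_prod[of b p "Si *\<^sub>v b"] by simp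
  qed
  have t2: "(Ai *\<^sub>v v) \<bullet> (P22 *\<^sub>v (Ai *\<^sub>v v)) = v \<bullet> (Ai *\<^sub>v v)"
    using assoc_mult_mat_vec[OF P22 Ai v, symmetric] PAi v comm_scalar_prod[OF aiv v] by simp
  show ?thesis using 1 unfolding r_def[symmetric] b_def[symmetric] sol(2) t1 t2 .
qed

lemma J1J2: "four_block_mat (0\<^sub>m q p :: real mat) (- 1\<^sub>m q) (1\<^sub>m p) (0\<^sub>m p q)
   = - transpose_mat (four_block_mat (0\<^sub>m p q) (- 1\<^sub>m p) (1\<^sub>m q) (0\<^sub>m q p))"
  by (rule eq_matI) auto

lemma charM1:
  "psd q (transpose_mat (1\<^sub>m q @\<^sub>r Z) * (four_block_mat (0\<^sub>m q p) (- 1\<^sub>m q) (1\<^sub>m p) (0\<^sub>m p q) * X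
                         * four_block_mat (0\<^sub>m p q) (- 1\<^sub>m p) (1\<^sub>m q) (0\<^sub>m q p)) * (1\<^sub>m q @\<^sub>r Z))
   \<longleftrightarrow> (\<forall>v \<in> carrier_vec q. ((Z + P12 * Ai) *\<^sub>v v) \<bullet> (Si *\<^sub>v ((Z + P12 * Ai) *\<^sub>v v)) \<le> v \<bullet> ((- Ai) *\<^sub>v v))"
proof -
  let ?J1 = "four_block_mat (0\<^sub>m q p) (- 1\<^sub>m q) (1\<^sub>m p) (0\<^sub>m p q)"
  let ?J2 = "four_block_mat (0\<^sub>m p q) (- 1\<^sub>m p) (1\<^sub>m q) (0\<^sub>m q p)"
  let ?T = "1\<^sub>m q @\<^sub>r Z"
  let ?K = "transpose_mat ?J2 * X * ?J2"
  have J2: "?J2 \<in> carrier_mat (p+q) (q+p)" by auto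
  have T: "?T \<in> carrier_mat (q+p) q" using Z by auto
  have K: "?K \<in> carrier_mat (q+p) (q+p)" using J2 X by auto
  have mK: "- ?K \<in> carrier_mat (q+p) (q+p)" using K by simp
  have Ks: "transpose_mat ?K = ?K" by (rule sym_tr[OF J2 X Xs])
  have mKs: "transpose_mat (- ?K) = - ?K" using Ks by (simp add: transpose_uminus)
  have JJ: "?J1 * X * ?J2 = - ?K"
    unfolding J1J2 using J2 X by simp
  have "psd q (transpose_mat ?T * (?J1 * X * ?J2) * ?T) \<longleftrightarrow>
      (\<forall>v \<in> carrier_vec q. (?T *\<^sub>v v) \<bullet> ((- ?K) *\<^sub>v (?T *\<^sub>v v)) \<ge> 0)"
    unfolding JJ by (rule psd_tr[OF T mK mKs])
  also have "\<dots> \<longleftrightarrow> (\<forall>v \<in> carrier_vec q. ((Z + P12 * Ai) *\<^sub>v v) \<bullet> (Si *\<^sub>v ((Z + P12 * Ai) *\<^sub>v v)) \<le> v \<bullet> ((- Ai) *\<^sub>v v))"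
  proof (intro ball_cong refl)
    fix v :: "real vec" assume v: "v \<in> carrier_vec q"
    have Tv: "?T *\<^sub>v v = v @\<^sub>v (Z *\<^sub>v v)"
      using mat_mult_append[of "1\<^sub>m q" q q Z p v] Z v by simp
    have Tvc: "?T *\<^sub>v v \<in> carrier_vec (q+p)" using T v by simp
    have zv: "Z *\<^sub>v v \<in> carrier_vec p" using Z v by simp
    have J2T: "?J2 *\<^sub>v (?T *\<^sub>v v) = (- (Z *\<^sub>v v)) @\<^sub>v v"
    proof -
      have a: "(0\<^sub>m p q :: real mat) *\<^sub>v v = 0\<^sub>v p" by (rule eq_vecI, insert v, auto)
      have b: "(0\<^sub>m q p :: real mat) *\<^sub>v (Z *\<^sub>v v) = 0\<^sub>v q" by (rule eq_vecI, insert zv, auto)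
      have c: "(- 1\<^sub>m p :: real mat) *\<^sub>v (Z *\<^sub>v v) = - (Z *\<^sub>v v)"
        using uminus_mult_mat_vec[of "Z *\<^sub>v v" "1\<^sub>m p"] zv Z by simp
      show ?thesis
      unfolding Tv using four_block_mat_mult_vec[of "0\<^sub>m p q" p q "- 1\<^sub>m p" p "1\<^sub>m q" q "0\<^sub>m q p" v "Z *\<^sub>v v"] v zv
      unfolding a b c by simp
    qed
    have "(?T *\<^sub>v v) \<bullet> ((- ?K) *\<^sub>v (?T *\<^sub>v v)) = - ((?T *\<^sub>v v) \<bullet> (?K *\<^sub>v (?T *\<^sub>v v)))"
      by (rule neg_quad[OF K Tvc])
    also have "(?T *\<^sub>v v) \<bullet> (?K *\<^sub>v (?T *\<^sub>v v)) = (?J2 *\<^sub>v (?T *\<^sub>v v)) \<bullet> (X *\<^sub>v (?J2 *\<^sub>v (?T *\<^sub>v v)))"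
      by (rule quad_tr[OF J2 X Tvc])
    also have "\<dots> = ((Z + P12 * Ai) *\<^sub>v v) \<bullet> (Si *\<^sub>v ((Z + P12 * Ai) *\<^sub>v v)) + v \<bullet> (Ai *\<^sub>v v)"
      unfolding J2T by (rule core[OF v])
    finally have e: "(?T *\<^sub>v v) \<bullet> ((- ?K) *\<^sub>v (?T *\<^sub>v v)) = - (((Z + P12 * Ai) *\<^sub>v v) \<bullet> (Si *\<^sub>v ((Z + P12 * Ai) *\<^sub>v v)) + v \<bullet> (Ai *\<^sub>v v))" .
    have e2: "v \<bullet> ((- Ai) *\<^sub>v v) = - (v \<bullet> (Ai *\<^sub>v v))" by (rule neg_quad[OF Ai v])
    show "(0 \<le> (?T *\<^sub>v v) \<bullet> ((- ?K) *\<^sub>v (?T *\<^sub>v v))) \<longleftrightarrow>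
       ((Z + P12 * Ai) *\<^sub>v v) \<bullet> (Si *\<^sub>v ((Z + P12 * Ai) *\<^sub>v v)) \<le> v \<bullet> ((- Ai) *\<^sub>v v)"
      unfolding e e2 by linarith
  qed
  finally show ?thesis .
qed

end


lemma mz: "(A :: real mat) \<in> carrier_mat m n \<Longrightarrow> A *\<^sub>v 0\<^sub>v n = 0\<^sub>v m"
  by (rule eq_vecI) auto

theorem lemmaA1:
  fixes p q :: nat and Psi11 Psi12 Psi22 :: "real mat"
  assumes "Psi11 \<in> carrier_mat p p" and "Psi12 \<in> carrier_mat p q" and "Psi22 \<in> carrier_mat q q"
    and "transpose_mat Psi11 = Psi11" and "transpose_mat Psi22 = Psi22"
    and "pd p (Psi11 - Psi12 * mat_inv Psi22 * transpose_mat Psi12)"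
    and "nd q Psi22"
  shows "let Psi = four_block_mat Psi11 Psi12 (transpose_mat Psi12) Psi22;
             S = Psi11 - Psi12 * mat_inv Psi22 * transpose_mat Psi12;
             Psi_sharp = four_block_mat (0\<^sub>m q p) (- 1\<^sub>m q) (1\<^sub>m p) (0\<^sub>m p q) * mat_inv Psi
                         * four_block_mat (0\<^sub>m p q) (- 1\<^sub>m p) (1\<^sub>m q) (0\<^sub>m q p);
             M = {Z \<in> carrier_mat p q.
                    psd p (transpose_mat (1\<^sub>m p @\<^sub>r transpose_mat Z) * Psi * (1\<^sub>m p @\<^sub>r transpose_mat Z))};
             M1 = {Z \<in> carrier_mat p q.
                    psd q (transpose_mat (1\<^sub>m q @\<^sub>r Z) * Psi_sharp * (1\<^sub>m q @\<^sub>r Z))};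
             M2 = {Z \<in> carrier_mat p q. \<exists>Q.
                    transpose_mat (1\<^sub>m p @\<^sub>r transpose_mat Z) * Psi * (1\<^sub>m p @\<^sub>r transpose_mat Z) = Q
                    \<and> psd p Q \<and> loewner_le p Q S}
         in M = M1 \<and> M1 = M2"
proof -
  note P11 = assms(1) and P12 = assms(2) and P22 = assms(3) and P11s = assms(4) and P22s = assms(5)
  define Ai where "Ai = mat_inv Psi22"
  define S where "S = Psi11 - Psi12 * Ai * transpose_mat Psi12"
  define Psi where "Psi = four_block_mat Psi11 Psi12 (transpose_mat Psi12) Psi22"
  have Spd: "pd p S" using assms(6) unfolding S_def Ai_def .
  have Npd: "pd q (- Psi22)" using assms(7) unfolding nd_def .
  have Nneg: "x \<bullet> (Psi22 *\<^sub>v x) \<le> 0" if x: "x \<in> carrier_vec q" for x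
  proof (cases "x = 0\<^sub>v q")
    case True thus ?thesis using x P22 by simp
  next
    case False
    hence "x \<bullet> ((- Psi22) *\<^sub>v x) > 0" using Npd x unfolding pd_def by auto
    thus ?thesis unfolding neg_quad[OF P22 x] by simp
  qed
  have P22inj: "v = 0\<^sub>v q" if v: "v \<in> carrier_vec q" and e: "Psi22 *\<^sub>v v = 0\<^sub>v q" for v
  proof (rule ccontr)
    assume "v \<noteq> 0\<^sub>v q"
    hence "v \<bullet> ((- Psi22) *\<^sub>v v) > 0" using Npd v unfolding pd_def by auto
    thus False unfolding neg_quad[OF P22 v] e using v by simp
  qed
  have AiF: "Ai \<in> carrier_mat q q \<and> Psi22 * Ai = 1\<^sub>m q \<and> Ai * Psi22 = 1\<^sub>m q"
    unfolding Ai_def by (rule mat_inv_inj[OF P22 P22inj])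
  hence Ai: "Ai \<in> carrier_mat q q" and PAi: "Psi22 * Ai = 1\<^sub>m q" and AiP: "Ai * Psi22 = 1\<^sub>m q" by auto
  have Ais: "transpose_mat Ai = Ai" unfolding Ai_def by (rule mat_inv_sym[OF P22 P22s AiF[unfolded Ai_def]])
  have S: "S \<in> carrier_mat p p" and Ss: "transpose_mat S = S"
    and Spos: "\<And>v. v \<in> carrier_vec p \<Longrightarrow> v \<noteq> 0\<^sub>v p \<Longrightarrow> v \<bullet> (S *\<^sub>v v) > 0"
    using Spd unfolding pd_def by auto
  have Sp: "x \<bullet> (S *\<^sub>v x) \<ge> 0" if x: "x \<in> carrier_vec p" for x
    using Spos[OF x] x S by (cases "x = 0\<^sub>v p") auto
  have Sinj: "v = 0\<^sub>v p" if v: "v \<in> carrier_vec p" and e: "S *\<^sub>v v = 0\<^sub>v p" for v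
    using Spos[OF v] e v by auto
  define Si where "Si = mat_inv S"
  have SiF: "Si \<in> carrier_mat p p \<and> S * Si = 1\<^sub>m p \<and> Si * S = 1\<^sub>m p"
    unfolding Si_def by (rule mat_inv_inj[OF S Sinj])
  hence Si: "Si \<in> carrier_mat p p" and SSi: "S * Si = 1\<^sub>m p" and SiS: "Si * S = 1\<^sub>m p" by auto
  have Psi: "Psi \<in> carrier_mat (p+q) (p+q)" unfolding Psi_def using P11 P12 P22 by simp
  have Psis: "transpose_mat Psi = Psi" unfolding Psi_def
    using transpose_four_block_mat[OF P11 P12 _ P22] P12 P11s P22s by simp
  have Psiinj: "v = 0\<^sub>v (p+q)" if v: "v \<in> carrier_vec (p+q)" and e: "Psi *\<^sub>v v = 0\<^sub>v (p+q)" for v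
  proof -
    define y1 where "y1 = vec_first v p"
    define y2 where "y2 = vec_last v q"
    have y1: "y1 \<in> carrier_vec p" and y2: "y2 \<in> carrier_vec q" unfolding y1_def y2_def by auto
    have vv: "v = y1 @\<^sub>v y2" unfolding y1_def y2_def using v by simp
    have z: "0\<^sub>v (p+q) = (0\<^sub>v p :: real vec) @\<^sub>v 0\<^sub>v q" by (rule eq_vecI) auto
    have eq: "four_block_mat Psi11 Psi12 (transpose_mat Psi12) Psi22 *\<^sub>v (y1 @\<^sub>v y2) = 0\<^sub>v p @\<^sub>v 0\<^sub>v q"
      using e unfolding vv z Psi_def .
    note sol = solve[OF P11 P12 P22 P11s P22s Ai PAi AiP Ais y1 y2 zero_carrier_vec zero_carrier_vec eq]
    have "S *\<^sub>v y1 = 0\<^sub>v p" unfolding S_def sol(1) using P12 Ai by (simp add: mz[OF Ai] mz[OF P12])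
    hence y10: "y1 = 0\<^sub>v p" by (rule Sinj[OF y1])
    have "y2 = 0\<^sub>v q" using sol(2) unfolding y10 using P12 Ai y2 by (simp add: mz[OF Ai] mz[OF P12] mz[of "transpose_mat Psi12" q p])
    thus ?thesis unfolding vv y10 z by simp
  qed
  define X where "X = mat_inv Psi"
  have XF: "X \<in> carrier_mat (p+q) (p+q) \<and> Psi * X = 1\<^sub>m (p+q) \<and> X * Psi = 1\<^sub>m (p+q)"
    unfolding X_def by (rule mat_inv_inj[OF Psi Psiinj])
  hence X: "X \<in> carrier_mat (p+q) (p+q)" and PX: "Psi * X = 1\<^sub>m (p+q)" by auto
  have Xs: "transpose_mat X = X" unfolding X_def by (rule mat_inv_sym[OF Psi Psis XF[unfolded X_def]])
  have N: "- Psi22 \<in> carrier_mat q q" using P22 by simp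
  have Ns: "transpose_mat (- Psi22) = - Psi22" using P22s by (simp add: transpose_uminus)
  have Np: "x \<bullet> ((- Psi22) *\<^sub>v x) \<ge> 0" if x: "x \<in> carrier_vec q" for x
    unfolding neg_quad[OF P22 x] using Nneg[OF x] by simp
  have Ni: "- Ai \<in> carrier_mat q q" using Ai by simp
  have NNi: "(- Psi22) * (- Ai) = 1\<^sub>m q" using PAi P22 Ai by simp
  have NiN: "(- Ai) * (- Psi22) = 1\<^sub>m q" using AiP P22 Ai by simp
  have W: "Z + Psi12 * Ai \<in> carrier_mat p q" if "Z \<in> carrier_mat p q" for Z
    using P12 Ai that by (intro add_carrier_mat) auto
  show ?thesis
    unfolding Let_def Ai_def[symmetric] S_def[symmetric] Psi_def[symmetric] X_def[symmetric]
  proof (intro conjI)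
    show "{Z \<in> carrier_mat p q. psd p (transpose_mat (1\<^sub>m p @\<^sub>r transpose_mat Z) * Psi * (1\<^sub>m p @\<^sub>r transpose_mat Z))} =
      {Z \<in> carrier_mat p q. psd q (transpose_mat (1\<^sub>m q @\<^sub>r Z) *
        (four_block_mat (0\<^sub>m q p) (- 1\<^sub>m q) (1\<^sub>m p) (0\<^sub>m p q) * X * four_block_mat (0\<^sub>m p q) (- 1\<^sub>m p) (1\<^sub>m q) (0\<^sub>m q p)) *
        (1\<^sub>m q @\<^sub>r Z))}"
    proof (intro Collect_cong conj_cong refl)
      fix Z :: "real mat" assume Z: "Z \<in> carrier_mat p q"
      show "psd p (transpose_mat (1\<^sub>m p @\<^sub>r transpose_mat Z) * Psi * (1\<^sub>m p @\<^sub>r transpose_mat Z)) =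
        psd q (transpose_mat (1\<^sub>m q @\<^sub>r Z) *
        (four_block_mat (0\<^sub>m q p) (- 1\<^sub>m q) (1\<^sub>m p) (0\<^sub>m p q) * X * four_block_mat (0\<^sub>m p q) (- 1\<^sub>m p) (1\<^sub>m q) (0\<^sub>m q p)) *
        (1\<^sub>m q @\<^sub>r Z))"
        unfolding Psi_def
        using charM[OF P11 P12 P22 P11s P22s Ai PAi AiP Ais S_def Ss Nneg Z]
        charM1[OF P11 P12 P22 P11s P22s Ai PAi AiP Ais S_def Z Si SiS X PX[unfolded Psi_def] Xs]
        equiv_core[OF S Ss Sp Si SSi N Ns Np Ni NNi NiN W[OF Z]] by blast
    qed
  next
    show "{Z \<in> carrier_mat p q. psd q (transpose_mat (1\<^sub>m q @\<^sub>r Z) *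
        (four_block_mat (0\<^sub>m q p) (- 1\<^sub>m q) (1\<^sub>m p) (0\<^sub>m p q) * X * four_block_mat (0\<^sub>m p q) (- 1\<^sub>m p) (1\<^sub>m q) (0\<^sub>m q p)) *
        (1\<^sub>m q @\<^sub>r Z))} =
      {Z \<in> carrier_mat p q. \<exists>Q. transpose_mat (1\<^sub>m p @\<^sub>r transpose_mat Z) * Psi * (1\<^sub>m p @\<^sub>r transpose_mat Z) = Q
         \<and> psd p Q \<and> loewner_le p Q S}"
    proof (intro Collect_cong conj_cong refl)
      fix Z :: "real mat" assume Z: "Z \<in> carrier_mat p q"
      show "psd q (transpose_mat (1\<^sub>m q @\<^sub>r Z) *
        (four_block_mat (0\<^sub>m q p) (- 1\<^sub>m q) (1\<^sub>m p) (0\<^sub>m p q) * X * four_block_mat (0\<^sub>m p q) (- 1\<^sub>m p) (1\<^sub>m q) (0\<^sub>m q p)) *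
        (1\<^sub>m q @\<^sub>r Z)) =
        (\<exists>Q. transpose_mat (1\<^sub>m p @\<^sub>r transpose_mat Z) * Psi * (1\<^sub>m p @\<^sub>r transpose_mat Z) = Q
         \<and> psd p Q \<and> loewner_le p Q S)"
      proof -
        let ?F = "transpose_mat (1\<^sub>m p @\<^sub>r transpose_mat Z) * Psi * (1\<^sub>m p @\<^sub>r transpose_mat Z)"
        have c2: "psd p ?F \<Longrightarrow> loewner_le p ?F S"
          unfolding Psi_def using charM2[OF P11 P12 P22 P11s P22s Ai PAi AiP Ais S_def Ss Nneg Z] by blast
        have e: "psd q (transpose_mat (1\<^sub>m q @\<^sub>r Z) *
        (four_block_mat (0\<^sub>m q p) (- 1\<^sub>m q) (1\<^sub>m p) (0\<^sub>m p q) * X * four_block_mat (0\<^sub>m p q) (- 1\<^sub>m p) (1\<^sub>m q) (0\<^sub>m q p)) *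
        (1\<^sub>m q @\<^sub>r Z)) = psd p ?F"
          unfolding Psi_def
          using charM[OF P11 P12 P22 P11s P22s Ai PAi AiP Ais S_def Ss Nneg Z]
          charM1[OF P11 P12 P22 P11s P22s Ai PAi AiP Ais S_def Z Si SiS X PX[unfolded Psi_def] Xs]
          equiv_core[OF S Ss Sp Si SSi N Ns Np Ni NNi NiN W[OF Z]] by blast
        show ?thesis unfolding e using c2 by blast
      qed
    qed
  qed
qed

end
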